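(* Let $n$ be a positive integer and let $u$ denote the unique positive real root of $$x^{2n} + x^{2n-1} + \cdots + x^{n} - x^{n-1} - x^{n-2} - \cdots - x - 1 = 0$$ (so $u\in(0,1)$). Then $$2\,\mathrm{Li}_2\!\left(u^{n+1}\right) - 2\,\mathrm{Li}_2\!\left(u^{n}\right) - \mathrm{Li}_2(u) - n^2 \log^2(u) = -\zeta(2).$$
   Context: $\mathrm{Li}_2(z)=\sum_{k\ge1} z^k/k^2$ for $|z|\le 1$ is the dilogarithm, $\log$ is the real natural logarithm, and $\zeta(2)=\pi^2/6$. *)

theory Defs
  imports "HOL-Analysis.Analysis"
begin

definition Li2 :: "real \<Rightarrow> real" where
  "Li2 z = (\<Sum>k. z ^ (k + 1) / (real (k + 1))^2)"

end

theory Submission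
  imports Defs
begin

lemma Li2_1: "Li2 1 = pi^2/6"
  using inverse_squares_sums unfolding Li2_def
  by (simp add: sums_iff add.commute)

lemma Li2_cont: "continuous_on {-1..1} Li2"
proof -
  have "uniform_limit {-1..1} (\<lambda>n x. \<Sum>i<n. x ^ (i + 1) / (real (i + 1))^2)
          (\<lambda>x. suminf (\<lambda>i. x ^ (i + 1) / (real (i + 1))^2)) sequentially"
  proof (rule Weierstrass_m_test)
    fix n and x :: real assume "x \<in> {-1..1}"
    then have "\<bar>x\<bar> \<le> 1" by auto
    then have "\<bar>x\<bar> ^ (n+1) \<le> 1" by (intro power_le_one) auto
    then show "norm (x ^ (n + 1) / (real (n + 1))^2) \<le> 1 / (real (n+1))^2"
      by (simp add: abs_divide power_abs abs_mult divide_right_mono del: power_Suc)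
  next
    show "summable (\<lambda>n. 1 / (real (n+1))^2)"
      using inverse_squares_sums by (simp add: sums_iff add.commute)
  qed
  then show ?thesis unfolding Li2_def[abs_def]
    by (rule uniform_limit_theorem[rotated]) (auto intro!: always_eventually continuous_intros)
qed


lemma ln_sum: assumes "0 < z" "z < 1"
  shows "(\<Sum>n. z^n / real (n+1)) = - ln (1 - z) / z"
proof -
  have "ln (1 - z) = (\<Sum>n. (-1)^n * (1 / real (n + 1)) * ((1 - z) - 1)^(Suc n))"
    using assms by (intro ln_series) auto
  also have "\<dots> = (\<Sum>n. (- z) * (z^n / real (n+1)))"
    by (simp add: power_minus' algebra_simps)
  also have "\<dots> = - z * (\<Sum>n. z^n / real (n+1))"
  proof (rule suminf_mult)
    show "summable (\<lambda>n. z ^ n / real (n + 1))"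
    proof (rule summable_comparison_test)
      show "\<exists>N. \<forall>n\<ge>N. norm (z ^ n / real (n + 1)) \<le> z ^ n"
        using assms by (auto simp: divide_le_eq)
      show "summable (\<lambda>n. z^n)" using assms by auto
    qed
  qed
  finally show ?thesis using assms by (simp add: field_simps)
qed

lemma Li2_deriv: assumes "0 < y" "y < 1"
  shows "(Li2 has_real_derivative (- ln (1 - y) / y)) (at y)"
proof -
  define c where "c n = (if n = 0 then 0 else 1 / (real n)^2)" for n
  have c_le: "\<bar>c n\<bar> \<le> 1" for n by (auto simp: c_def)
  have sm: "summable (\<lambda>n. c n * z ^ n)" if "norm z < 1" for z :: real
  proof (rule summable_comparison_test)
    show "\<exists>N. \<forall>n\<ge>N. norm (c n * z ^ n) \<le> \<bar>z\<bar> ^ n"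
      using c_le by (auto simp: abs_mult power_abs intro!: mult_left_le_one_le)
    show "summable (\<lambda>n. \<bar>z\<bar> ^ n)" using that by auto
  qed
  have eq: "Li2 z = (\<Sum>n. c n * z ^ n)" if "norm z < 1" for z :: real
    using suminf_split_head[OF sm[OF that]] by (simp add: Li2_def c_def)
  have "((\<lambda>z. \<Sum>n. c n * z ^ n) has_field_derivative (\<Sum>n. diffs c n * y ^ n)) (at y)"
    by (rule termdiffs_strong'[of 1]) (use sm assms in auto)
  moreover have "diffs c n = 1 / real (n+1)" for n
    by (simp add: diffs_def c_def power2_eq_square)
  ultimately have d: "((\<lambda>z. \<Sum>n. c n * z ^ n) has_field_derivative (- ln (1 - y) / y)) (at y)"
    using ln_sum[OF assms] by simp
  show ?thesis
    by (rule has_field_derivative_transform_within_open[OF d, of "{-1<..<1}"])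
       (use assms eq in auto)
qed

lemma alg: fixes x p q :: real assumes "x > 0" "2*x - 1 \<noteq> 0"
  shows "2 * ((- (p - q) / ((2*x-1)/x)) * (1/x^2))
        - 2 * (- p / x)
        - (- (2*(p-q)) / ((2*x-1)/x^2)) * (2*(1-x)/x^3)
        - 2 * q / x = 0"
proof -
  have e1: "2 * ((- (p - q) / ((2*x-1)/x)) * (1/x^2)) = -2*(p-q)/(x*(2*x-1))"
    using assms by (simp add: field_simps power2_eq_square)
  have e3: "(- (2*(p-q)) / ((2*x-1)/x^2)) * (2*(1-x)/x^3) = -4*(p-q)*(1-x)/(x*(2*x-1))"
    using assms by (simp add: field_simps power2_eq_square power3_eq_cube)
  have e4: "-2*(p-q)/(x*(2*x-1)) - (-4*(p-q)*(1-x)/(x*(2*x-1))) = (p-q)*(2-4*x)/(x*(2*x-1))"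
    by (simp add: diff_divide_distrib[symmetric] algebra_simps)
  have e5: "(p-q)*(2-4*x)/(x*(2*x-1)) = -2*(p-q)/x"
    using assms by (simp add: field_simps)
  have e6: "- 2 * (- p / x) = 2*(p/x)" "2*q/x = 2*(q/x)" "-2*(p-q)/x = -2*(p/x) + 2*(q/x)"
    by (simp_all add: diff_divide_distrib)
  show ?thesis unfolding e1 e3 
    using e4 e5 e6 by linarith
qed

lemma key:
  fixes a :: real
  assumes a: "1/2 < a" "a < 1"
  shows "2 * Li2 ((2*a-1)/a) - 2 * Li2 a - Li2 ((2*a-1)/a^2) - (ln a)^2 = - (pi^2/6)"
proof -
  define F where "F x = 2 * Li2 ((2*x-1)/x) - 2 * Li2 x - Li2 ((2*x-1)/x^2) - (ln x)^2" for x :: real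
  have sq: "2*x - 1 \<le> x^2" for x :: real
    using sum_squares_ge_zero[of "x-1" 0] by (simp add: power2_eq_square algebra_simps)
  have cont: "continuous_on {a..1} F"
  proof -
    have r1: "(\<lambda>x. (2*x-1)/x) ` {a..1} \<subseteq> {-1..1}"
      using a by (auto simp: field_simps)
    have r2: "(\<lambda>x. (2*x-1)/x^2) ` {a..1} \<subseteq> {-1..1}"
    proof
      fix y assume "y \<in> (\<lambda>x. (2*x-1)/x^2) ` {a..1}"
      then obtain x where x: "x \<in> {a..1}" "y = (2*x-1)/x^2" by auto
      have "x^2 > 0" using x a by auto
      have "0 \<le> (2*x-1)/x^2" using x a by (intro divide_nonneg_nonneg) auto
      moreover have "(2*x-1)/x^2 \<le> 1" using \<open>x^2>0\<close> sq[of x] by (simp add: divide_le_eq)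
      ultimately show "y \<in> {-1..1}" using x by auto
    qed
    have r3: "{a..1} \<subseteq> {-1..1}" using a by auto
    have c1: "continuous_on {a..1} (\<lambda>x. Li2 ((2*x-1)/x))"
      by (rule continuous_on_compose2[OF Li2_cont _ r1]) (use a in \<open>auto intro!: continuous_intros\<close>)
    have c2: "continuous_on {a..1} (\<lambda>x. Li2 ((2*x-1)/x^2))"
      by (rule continuous_on_compose2[OF Li2_cont _ r2]) (use a in \<open>auto intro!: continuous_intros\<close>)
    have c3: "continuous_on {a..1} Li2"
      by (rule continuous_on_subset[OF Li2_cont r3])
    have c4: "continuous_on {a..1} (\<lambda>x. (ln x)^2)"
      using a by (auto intro!: continuous_intros)
    show ?thesis unfolding F_def[abs_def]
      by (intro continuous_intros c1 c2 c3 c4)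
  qed
  have der: "(F has_real_derivative 0) (at x)" if x: "a < x" "x < 1" for x
  proof -
    have x0: "x > 0" "1/2 < x" using x a by auto
    have g1: "0 < (2*x-1)/x" "(2*x-1)/x < 1" using x0 x by (auto simp: field_simps)
    have "0 < (1-x)*(1-x)" using x by auto
    then have sq2: "2*x-1 < x^2" by (simp add: power2_eq_square algebra_simps)
    have g2: "0 < (2*x-1)/x^2" "(2*x-1)/x^2 < 1"
      using x0 x sq2 by (auto simp: field_simps)
    note g2' = g2(2)
    have l1: "ln (1 - (2*x-1)/x) = ln (1-x) - ln x"
    proof -
      have "1 - (2*x-1)/x = (1-x)/x" using x0 by (simp add: field_simps)
      then show ?thesis using x0 x by (simp add: ln_div)
    qed
    have l2: "ln (1 - (2*x-1)/x^2) = 2 * (ln (1-x) - ln x)"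
    proof -
      have "1 - (2*x-1)/x^2 = ((1-x)/x)^2" using x0 by (simp add: field_simps power2_eq_square)
      then show ?thesis using x0 x by (simp add: ln_div ln_realpow)
    qed
    have d1: "((\<lambda>x. Li2 ((2*x-1)/x)) has_real_derivative
        (- ln (1 - (2*x-1)/x) / ((2*x-1)/x)) * (1/x^2)) (at x)"
      apply (rule DERIV_chain2[where g="\<lambda>x. (2*x-1)/x", OF Li2_deriv[OF g1]])
      using x0 by (auto intro!: derivative_eq_intros simp: field_simps power2_eq_square)
    have d2: "((\<lambda>x. Li2 ((2*x-1)/x^2)) has_real_derivative
        (- ln (1 - (2*x-1)/x^2) / ((2*x-1)/x^2)) * (2*(1-x)/x^3)) (at x)"
      apply (rule DERIV_chain2[where g="\<lambda>x. (2*x-1)/x^2", OF Li2_deriv[OF g2(1) g2']])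
      using x0 by (auto intro!: derivative_eq_intros simp: field_simps power2_eq_square power3_eq_cube)
    have d3: "(Li2 has_real_derivative (- ln (1 - x) / x)) (at x)"
      using Li2_deriv x0 x by auto
    have d4: "((\<lambda>x. (ln x)^2) has_real_derivative (2 * ln x / x)) (at x)"
      using x0 by (auto intro!: derivative_eq_intros)
    have "(F has_real_derivative
        2 * ((- ln (1 - (2*x-1)/x) / ((2*x-1)/x)) * (1/x^2))
        - 2 * (- ln (1 - x) / x)
        - (- ln (1 - (2*x-1)/x^2) / ((2*x-1)/x^2)) * (2*(1-x)/x^3)
        - 2 * ln x / x) (at x)"
      unfolding F_def[abs_def]
      by (intro DERIV_diff DERIV_cmult d1 d2 d3 d4)
    moreover have "2 * ((- ln (1 - (2*x-1)/x) / ((2*x-1)/x)) * (1/x^2))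
        - 2 * (- ln (1 - x) / x)
        - (- ln (1 - (2*x-1)/x^2) / ((2*x-1)/x^2)) * (2*(1-x)/x^3)
        - 2 * ln x / x = 0"
    proof -
      have "2*x - 1 \<noteq> 0" using x0 by auto
      then show ?thesis unfolding l1 l2 using x0 by (rule_tac alg) auto
    qed
    ultimately show ?thesis by simp
  qed
  have "F 1 = F a" by (rule DERIV_isconst_end[OF _ cont der]) (use a in auto)
  moreover have "F 1 = - (pi^2/6)" by (simp add: F_def Li2_1)
  ultimately show ?thesis by (simp add: F_def)
qed


lemma X:
  fixes a u :: real assumes ua: "u * a^2 = 2*a - 1" and a0: "a > 0" and u0: "u > 0" and u1: "u \<noteq> 1"
  shows "u < 1" "1/2 < a" "u = (2*a-1)/a^2" "u * a = (2*a-1)/a"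
proof -
  have "(a-1)^2 = a^2 - 2*a + 1" by (simp add: power2_diff)
  moreover have "0 \<le> (a-1)^2" by simp
  ultimately have s: "2*a - 1 \<le> a^2" by linarith
  have "u * a^2 \<le> 1 * a^2" unfolding ua using s by simp
  then have "u \<le> 1" by (rule mult_right_le_imp_le) (use a0 in simp)
  then show "u < 1" using u1 by simp
  have "0 < u * a^2" using u0 a0 by simp
  then have "0 < 2*a - 1" by (simp only: ua)
  then show "1/2 < a" by simp
  show "u = (2*a-1)/a^2" using ua a0 by (simp add: eq_divide_eq)
  show "u * a = (2*a-1)/a" using ua a0 by (simp add: eq_divide_eq power2_eq_square mult.assoc)
qed

theorem theorem3p1:
  fixes n :: nat and u :: real
  assumes "n \<ge> 1"
    and "u > 0"
    and "(\<Sum>k=n..2*n. u ^ k) - (\<Sum>k<n. u ^ k) = 0"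
  shows "2 * Li2 (u ^ (n + 1)) - 2 * Li2 (u ^ n) - Li2 u - (real n)^2 * (ln u)^2 = - (pi^2 / 6)"
proof -
  define a where "a = u ^ n"
  have split: "(\<Sum>k<Suc (2*n). u ^ k) = (\<Sum>k<n. u ^ k) + (\<Sum>k=n..2*n. u ^ k)"
  proof -
    have "{..<Suc (2*n)} = {..<n} \<union> {n..2*n}" by auto
    moreover have "(\<Sum>k\<in>{..<n} \<union> {n..2*n}. u ^ k) = (\<Sum>k<n. u ^ k) + (\<Sum>k=n..2*n. u ^ k)"
      by (rule sum.union_disjoint) auto
    ultimately show ?thesis by simp
  qed
  have h: "(\<Sum>k<Suc (2*n). u ^ k) = 2 * (\<Sum>k<n. u ^ k)"
    using split assms(3) by simp
  have u1: "u \<noteq> 1"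
  proof
    assume "u = 1" then show False using h by simp
  qed
  have eq0: "1 - u ^ Suc (2*n) = 2 * (1 - u ^ n)"
  proof -
    have "(1 - u) * (\<Sum>k<Suc (2*n). u ^ k) = (1 - u) * (2 * (\<Sum>k<n. u ^ k))" using h by simp
    then show ?thesis by (simp only: one_diff_power_eq[of u, symmetric] mult.left_commute[of "1-u" 2])
  qed
  have ua: "u * a^2 = 2*a - 1"
  proof -
    have e: "u ^ Suc (2*n) = u * a^2" by (simp add: a_def power_mult[symmetric] mult.commute)
    from eq0 have "1 - u*a^2 = 2*(1-a)" by (simp only: e a_def[symmetric])
    then show ?thesis by (simp add: algebra_simps)
  qed
  have a0: "a > 0" using assms by (simp add: a_def)
  note XX = X[OF ua a0 \<open>u > 0\<close> u1]
  have ult: "u < 1" by (rule XX(1))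
  have a1: "a < 1" unfolding a_def using assms ult by (simp add: power_less_one_iff)
  have ah: "1/2 < a" by (rule XX(2))
  have uu: "u = (2*a-1)/a^2" by (rule XX(3))
  have "u ^ (n+1) = u * a" by (simp add: a_def)
  also have "\<dots> = (2*a-1)/a" by (rule XX(4))
  finally have un1: "u ^ (n+1) = (2*a-1)/a" .
  have lnp: "(real n)^2 * (ln u)^2 = (ln a)^2"
    using assms by (simp add: a_def ln_realpow power_mult_distrib)
  show ?thesis using key[OF ah a1] unfolding un1 lnp a_def[symmetric] uu[symmetric] .
qed

end
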